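(* Let $(S,K,I)$ be a split graph, and let $u\in I$ and $z\in K$ be such that $uxz$ is a path in $A_4(S)$ for some $x\in K$. Then $u$ and $z$ are joined by a path $P$ in $A_4(S)$ with $V(P)\setminus\{z\}\subseteq I$ and $|V(P)|\le 4$.
   Context: All graphs are finite and simple. A split graph is a graph $S$ whose vertex set is a disjoint union $V(S)=K\,\dot\cup\,I$ with $K$ a clique and $I$ an independent set; $(K,I)$ is called a bipartition of $S$, and $(S,K,I)$ denotes $S$ together with this fixed bipartition. A 2-switch in a graph $G$ is performed on four distinct vertices $a,b,c,d$ with $ab,cd\in E(G)$ and $ac,bd\notin E(G)$: it deletes $ab,cd$ and adds $ac,bd$; $a,b,c,d$ are said to participate in it. $A_4(G)$ is the graph with vertex set $V(G)$ in which distinct $u,v$ are adjacent iff some 2-switch on $G$ has both $u$ and $v$ among its participating vertices. *)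

theory Defs
  imports Main
begin

definition simple_graph :: "'a set \<Rightarrow> ('a \<Rightarrow> 'a \<Rightarrow> bool) \<Rightarrow> bool" where
  "simple_graph V E \<longleftrightarrow> finite V \<and> (\<forall>u v. E u v \<longrightarrow> u \<in> V \<and> v \<in> V)
     \<and> (\<forall>u v. E u v \<longrightarrow> E v u) \<and> (\<forall>v. \<not> E v v)"

definition split_graph :: "'a set \<Rightarrow> ('a \<Rightarrow> 'a \<Rightarrow> bool) \<Rightarrow> 'a set \<Rightarrow> 'a set \<Rightarrow> bool" where
  "split_graph V E K I \<longleftrightarrow> simple_graph V E \<and> V = K \<union> I \<and> K \<inter> I = {}
     \<and> (\<forall>u\<in>K. \<forall>v\<in>K. u \<noteq> v \<longrightarrow> E u v)
     \<and> (\<forall>u\<in>I. \<forall>v\<in>I. \<not> E u v)"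

definition two_switch :: "'a set \<Rightarrow> ('a \<Rightarrow> 'a \<Rightarrow> bool) \<Rightarrow> 'a \<Rightarrow> 'a \<Rightarrow> 'a \<Rightarrow> 'a \<Rightarrow> bool" where
  "two_switch V E a b c d \<longleftrightarrow> a \<in> V \<and> b \<in> V \<and> c \<in> V \<and> d \<in> V
     \<and> distinct [a, b, c, d] \<and> E a b \<and> E c d \<and> \<not> E a c \<and> \<not> E b d"

definition A4 :: "'a set \<Rightarrow> ('a \<Rightarrow> 'a \<Rightarrow> bool) \<Rightarrow> 'a \<Rightarrow> 'a \<Rightarrow> bool" where
  "A4 V E u v \<longleftrightarrow> u \<noteq> v \<and>
     (\<exists>a b c d. two_switch V E a b c d \<and> u \<in> {a, b, c, d} \<and> v \<in> {a, b, c, d})"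

definition is_path :: "('a \<Rightarrow> 'a \<Rightarrow> bool) \<Rightarrow> 'a list \<Rightarrow> bool" where
  "is_path R ps \<longleftrightarrow> ps \<noteq> [] \<and> distinct ps \<and> (\<forall>i. Suc i < length ps \<longrightarrow> R (ps ! i) (ps ! Suc i))"

end

theory Submission
  imports Defs
begin

lemma ts_cls:
  assumes sg: "split_graph V E K I" and t: "two_switch V E a b c d"
  shows "(a\<in>K \<and> d\<in>K \<and> b\<in>I \<and> c\<in>I) \<or> (b\<in>K \<and> c\<in>K \<and> a\<in>I \<and> d\<in>I)"
proof -
  have V: "V = K \<union> I" and dis: "K \<inter> I = {}" and cl: "\<forall>u\<in>K. \<forall>v\<in>K. u \<noteq> v \<longrightarrow> E u v"
    and ind: "\<forall>u\<in>I. \<forall>v\<in>I. \<not> E u v" using sg unfolding split_graph_def by auto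
  have m: "a \<in> V" "b \<in> V" "c \<in> V" "d \<in> V" "a \<noteq> c" "b \<noteq> d" "E a b" "E c d" "\<not> E a c" "\<not> E b d"
    using t unfolding two_switch_def by auto
  have 1: "\<not> (a \<in> I \<and> b \<in> I)" "\<not> (c \<in> I \<and> d \<in> I)" using ind m by blast+
  have 2: "\<not> (a \<in> K \<and> c \<in> K)" "\<not> (b \<in> K \<and> d \<in> K)" using cl m by blast+
  have 3: "a \<in> K \<longleftrightarrow> a \<notin> I" "b \<in> K \<longleftrightarrow> b \<notin> I" "c \<in> K \<longleftrightarrow> c \<notin> I" "d \<in> K \<longleftrightarrow> d \<notin> I"
    using V dis m by blast+
  show ?thesis using 1 2 3 by blast
qed

lemma ts_sym1: "two_switch V E a b c d \<Longrightarrow> (\<forall>u v. E u v \<longrightarrow> E v u) \<Longrightarrow> two_switch V E d c b a"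
  unfolding two_switch_def by auto
lemma ts_sym2: "two_switch V E a b c d \<Longrightarrow> (\<forall>u v. E u v \<longrightarrow> E v u) \<Longrightarrow> two_switch V E b a d c"
  unfolding two_switch_def by auto

lemma ts_norm:
  assumes sg: "split_graph V E K I" and t: "two_switch V E a b c d"
  shows "\<exists>k1 i1 i2 k2. two_switch V E k1 i1 i2 k2 \<and> {a,b,c,d} = {k1,i1,i2,k2}
     \<and> k1\<in>K \<and> k2\<in>K \<and> i1\<in>I \<and> i2\<in>I"
proof -
  have sym: "\<forall>u v. E u v \<longrightarrow> E v u" using sg unfolding split_graph_def simple_graph_def by blast
  from ts_cls[OF sg t] show ?thesis
  proof
    assume "a\<in>K \<and> d\<in>K \<and> b\<in>I \<and> c\<in>I" then show ?thesis using t by blast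
  next
    assume h: "b\<in>K \<and> c\<in>K \<and> a\<in>I \<and> d\<in>I"
    have "two_switch V E b a d c" using ts_sym2[OF t sym] .
    then show ?thesis using h by blast
  qed
qed

definition sw where
  "sw V E K I k1 i1 i2 k2 \<longleftrightarrow> two_switch V E k1 i1 i2 k2 \<and> k1\<in>K \<and> k2\<in>K \<and> i1\<in>I \<and> i2\<in>I"

lemma A4_KK:
  assumes sg: "split_graph V E K I" and "A4 V E x z" "x\<in>K" "z\<in>K"
  shows "\<exists>i1 i2. sw V E K I x i1 i2 z"
proof -
  have sym: "\<forall>u v. E u v \<longrightarrow> E v u" using sg unfolding split_graph_def simple_graph_def by blast
  have dis: "K \<inter> I = {}" using sg unfolding split_graph_def by blast
  obtain a b c d where t: "two_switch V E a b c d" "x \<in> {a,b,c,d}" "z \<in> {a,b,c,d}" "x\<noteq>z"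
    using assms(2) unfolding A4_def by blast
  obtain k1 i1 i2 k2 where n: "two_switch V E k1 i1 i2 k2" "{a,b,c,d} = {k1,i1,i2,k2}"
     "k1\<in>K" "k2\<in>K" "i1\<in>I" "i2\<in>I" using ts_norm[OF sg t(1)] by blast
  have "x \<noteq> i1" "x \<noteq> i2" "z \<noteq> i1" "z \<noteq> i2" using dis assms n by auto
  then have "(x = k1 \<and> z = k2) \<or> (x = k2 \<and> z = k1)" using t n by auto
  then show ?thesis using n ts_sym1[OF n(1) sym] unfolding sw_def by blast
qed

lemma A4_IK:
  assumes sg: "split_graph V E K I" and "A4 V E u x" "u\<in>I" "x\<in>K"
  shows "\<exists>k w. sw V E K I x u w k \<or> sw V E K I x w u k"
proof -
  have sym: "\<forall>u v. E u v \<longrightarrow> E v u" using sg unfolding split_graph_def simple_graph_def by blast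
  have dis: "K \<inter> I = {}" using sg unfolding split_graph_def by blast
  obtain a b c d where t: "two_switch V E a b c d" "u \<in> {a,b,c,d}" "x \<in> {a,b,c,d}"
    using assms(2) unfolding A4_def by blast
  obtain k1 i1 i2 k2 where n: "two_switch V E k1 i1 i2 k2" "{a,b,c,d} = {k1,i1,i2,k2}"
     "k1\<in>K" "k2\<in>K" "i1\<in>I" "i2\<in>I" using ts_norm[OF sg t(1)] by blast
  have "x \<noteq> i1" "x \<noteq> i2" "u \<noteq> k1" "u \<noteq> k2" using dis assms n by auto
  then have "(x = k1 \<or> x = k2) \<and> (u = i1 \<or> u = i2)" using t n by auto
  then show ?thesis using n ts_sym1[OF n(1) sym] unfolding sw_def by blast
qed

lemma sw_A4:
  assumes "sw V E K I k1 i1 i2 k2" "p \<in> {k1,i1,i2,k2}" "q \<in> {k1,i1,i2,k2}" "p \<noteq> q"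
  shows "A4 V E p q"
  using assms unfolding A4_def sw_def by blast

lemma mk_sw:
  assumes sg: "split_graph V E K I" and "k1\<in>K" "k2\<in>K" "i1\<in>I" "i2\<in>I" "k1\<noteq>k2" "i1\<noteq>i2"
    "E k1 i1" "E i2 k2" "\<not> E k1 i2" "\<not> E i1 k2"
  shows "sw V E K I k1 i1 i2 k2"
  using assms unfolding sw_def two_switch_def split_graph_def by auto

lemma path2: "A4 V E u z \<Longrightarrow> \<exists>P. is_path (A4 V E) P \<and> hd P = u \<and> last P = z
           \<and> set P - {z} \<subseteq> I \<and> length P \<le> 4" if "u \<in> I" for u z I V E
  apply (rule exI[of _ "[u,z]"])
  using that by (auto simp: is_path_def A4_def less_Suc_eq)

lemma path3: "A4 V E u w \<Longrightarrow> A4 V E w z \<Longrightarrow> u \<noteq> z \<Longrightarrow> \<exists>P. is_path (A4 V E) P \<and> hd P = u \<and> last P = z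
           \<and> set P - {z} \<subseteq> I \<and> length P \<le> 4" if "u \<in> I" "w \<in> I" for u w z I V E
  apply (rule exI[of _ "[u,w,z]"])
  using that by (auto simp: is_path_def A4_def less_Suc_eq)

theorem lemma2p3:
  fixes V K I :: "'a set" and E :: "'a \<Rightarrow> 'a \<Rightarrow> bool" and u x z :: 'a
  assumes "split_graph V E K I"
    and "u \<in> I" and "z \<in> K" and "x \<in> K"
    and "is_path (A4 V E) [u, x, z]"
  shows "\<exists>P. is_path (A4 V E) P \<and> hd P = u \<and> last P = z
           \<and> set P - {z} \<subseteq> I \<and> length P \<le> 4"
proof -
  note sg = assms(1)
  have sym: "\<And>a b. E a b \<Longrightarrow> E b a" using sg unfolding split_graph_def simple_graph_def by blast
  have dis: "K \<inter> I = {}" using sg unfolding split_graph_def by blast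
  have symi: "\<And>a b. E a b \<longleftrightarrow> E b a" using sym by blast
  have uz: "u \<noteq> z" using assms(2,3) dis by blast
  have a1: "A4 V E u x" and a2: "A4 V E x z" using assms(5) unfolding is_path_def
    by (auto dest: spec[of _ 0] spec[of _ 1])
  obtain i1 i2 where s2: "sw V E K I x i1 i2 z" using A4_KK[OF sg a2 assms(4,3)] by blast
  obtain k w where s1: "sw V E K I x u w k \<or> sw V E K I x w u k" using A4_IK[OF sg a1 assms(2,4)] by blast
  from s2 have f2: "E x i1" "E i2 z" "\<not> E x i2" "\<not> E i1 z" "i1 \<in> I" "i2 \<in> I" "x \<noteq> z"
    "i1 \<noteq> i2"
    unfolding sw_def two_switch_def by auto
  show ?thesis
  proof (cases "z = k")
    case True
    have "A4 V E u z" using s1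
    proof
      assume s: "sw V E K I x u w k" show ?thesis by (rule sw_A4[OF s]) (use uz True in auto)
    next
      assume s: "sw V E K I x w u k" show ?thesis by (rule sw_A4[OF s]) (use uz True in auto)
    qed
    then show ?thesis by (rule path2[OF assms(2)])
  next
    case zk: False
    show ?thesis using s1
    proof
      assume s: "sw V E K I x u w k"
      then have f1: "E x u" "E w k" "\<not> E x w" "\<not> E u k" "w \<in> I" "k \<in> K" "u \<noteq> w"
        unfolding sw_def two_switch_def by auto
      show ?thesis
      proof (cases "E z u")
        case True
        show ?thesis
        proof (cases "E z w")
          case False
          have "sw V E K I z u w k" by (rule mk_sw[OF sg]) (use f1 True False zk assms symi dis in auto)
          then have "A4 V E u z" by (rule sw_A4) (use uz in auto)
          then show ?thesis by (rule path2[OF assms(2)])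
        next
          case zw: True
          have "sw V E K I x i1 w z" by (rule mk_sw[OF sg]) (use f1 f2 zw assms symi dis in auto)
          then have "A4 V E w z" by (rule sw_A4) (use f1 assms(3) dis in auto)
          moreover have "A4 V E u w" by (rule sw_A4[OF s]) (use f1 in auto)
          ultimately show ?thesis using path3[OF assms(2) f1(5) _ _ uz] by blast
        qed
      next
        case False
        have "sw V E K I z i2 u x" by (rule mk_sw[OF sg]) (use f1 f2 False assms symi dis in auto)
        then have "A4 V E u z" by (rule sw_A4) (use uz in auto)
        then show ?thesis by (rule path2[OF assms(2)])
      qed
    next
      assume s: "sw V E K I x w u k"
      then have f1: "E x w" "E u k" "\<not> E x u" "\<not> E w k" "w \<in> I" "k \<in> K" "u \<noteq> w"
        unfolding sw_def two_switch_def by auto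
      show ?thesis
      proof (cases "E z u")
        case True
        have "sw V E K I z u i1 x" by (rule mk_sw[OF sg]) (use f1 f2 True assms symi dis in auto)
        then have "A4 V E u z" by (rule sw_A4) (use uz in auto)
        then show ?thesis by (rule path2[OF assms(2)])
      next
        case zu: False
        show ?thesis
        proof (cases "E k i2")
          case False
          have "sw V E K I k u i2 z" by (rule mk_sw[OF sg]) (use f1 f2 zu False zk assms symi dis in auto)
          then have "A4 V E u z" by (rule sw_A4) (use uz in auto)
          then show ?thesis by (rule path2[OF assms(2)])
        next
          case ki2: True
          show ?thesis
          proof (cases "E z w")
            case True
            have "sw V E K I k u w z" by (rule mk_sw[OF sg]) (use f1 True zu zk assms symi dis in auto)
            then have "A4 V E u z" by (rule sw_A4) (use uz in auto)
            then show ?thesis by (rule path2[OF assms(2)])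
          next
            case zw: False
            have "sw V E K I x w i2 z" by (rule mk_sw[OF sg]) (use f1 f2 zw assms symi dis in auto)
            then have "A4 V E w z" by (rule sw_A4) (use f1 assms(3) dis in auto)
            moreover have "A4 V E u w" by (rule sw_A4[OF s]) (use f1 in auto)
            ultimately show ?thesis using path3[OF assms(2) f1(5) _ _ uz] by blast
          qed
        qed
      qed
    qed
  qed
qed

end
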